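(* There is an absolute constant $c>0$ such that for all sufficiently large $n$ there is no graph on $n$ vertices in which every induced subgraph on $c\log^3 n/\log\log n$ vertices contains both a clique of size $\log n$ and an independent set of size $\log n$.
   Context: Logarithms are natural; floors and ceilings are ignored. *)

theory Defs
  imports Complex_Main
begin

text \<open>A finite simple graph on the vertex set {0..<n}: an edge relation E that is
symmetric and irreflexive (only its restriction to the vertex set matters).\<close>
definition simple_graph :: "(nat \<Rightarrow> nat \<Rightarrow> bool) \<Rightarrow> bool" where
  "simple_graph E \<longleftrightarrow> (\<forall>u v. E u v \<longrightarrow> E v u) \<and> (\<forall>v. \<not> E v v)"

definition has_clique :: "(nat \<Rightarrow> nat \<Rightarrow> bool) \<Rightarrow> nat set \<Rightarrow> nat \<Rightarrow> bool" where
  "has_clique E S k \<longleftrightarrow> (\<exists>K. K \<subseteq> S \<and> card K = k \<and> (\<forall>u\<in>K. \<forall>v\<in>K. u \<noteq> v \<longrightarrow> E u v))"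

definition has_indep :: "(nat \<Rightarrow> nat \<Rightarrow> bool) \<Rightarrow> nat set \<Rightarrow> nat \<Rightarrow> bool" where
  "has_indep E S k \<longleftrightarrow> (\<exists>I. I \<subseteq> S \<and> card I = k \<and> (\<forall>u\<in>I. \<forall>v\<in>I. u \<noteq> v \<longrightarrow> \<not> E u v))"

end

theory Submission imports Defs "HOL-Real_Asymp.Real_Asymp" begin

definition indep_set :: "(nat \<Rightarrow> nat \<Rightarrow> bool) \<Rightarrow> nat set \<Rightarrow> bool" where
  "indep_set E I \<longleftrightarrow> (\<forall>u\<in>I. \<forall>v\<in>I. u \<noteq> v \<longrightarrow> \<not> E u v)"

definition clique_set :: "(nat \<Rightarrow> nat \<Rightarrow> bool) \<Rightarrow> nat set \<Rightarrow> bool" where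
  "clique_set E K \<longleftrightarrow> (\<forall>u\<in>K. \<forall>v\<in>K. u \<noteq> v \<longrightarrow> E u v)"

definition CN :: "(nat \<Rightarrow> nat \<Rightarrow> bool) \<Rightarrow> nat set \<Rightarrow> nat set \<Rightarrow> nat set" where
  "CN E Y T = {y\<in>Y. y \<notin> T \<and> (\<forall>t\<in>T. \<not> E y t \<and> \<not> E t y)}"

lemma cnt_sup:
  assumes fin: "finite Y" and KY: "K \<subseteq> Y" and cK: "card K = k" and km: "k \<le> m"
  shows "card {S. S \<subseteq> Y \<and> card S = m \<and> K \<subseteq> S} = (card Y - k) choose (m - k)"
proof -
  have finK: "finite K" using fin KY by (rule finite_subset[rotated])
  have eq: "{S. S \<subseteq> Y \<and> card S = m \<and> K \<subseteq> S} = (\<lambda>R. R \<union> K) ` {R. R \<subseteq> Y - K \<and> card R = m - k}"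
  proof (rule set_eqI, rule iffI)
    fix S assume "S \<in> {S. S \<subseteq> Y \<and> card S = m \<and> K \<subseteq> S}"
    then have S: "S \<subseteq> Y" "card S = m" "K \<subseteq> S" by auto
    have "card (S - K) = card S - card K" using finK S(3) by (rule card_Diff_subset)
    then have c: "card (S - K) = m - k" using S(2) cK by simp
    have e: "S = (S - K) \<union> K" using S(3) by blast
    have "S - K \<in> {R. R \<subseteq> Y - K \<and> card R = m - k}" using S(1) c by blast
    then show "S \<in> (\<lambda>R. R \<union> K) ` {R. R \<subseteq> Y - K \<and> card R = m - k}" using e by (rule image_eqI[rotated])
  next
    fix S assume "S \<in> (\<lambda>R. R \<union> K) ` {R. R \<subseteq> Y - K \<and> card R = m - k}"
    then obtain R where R: "R \<subseteq> Y - K" "card R = m - k" "S = R \<union> K" by blast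
    have finR: "finite R" using R(1) fin by (meson finite_Diff finite_subset)
    have dj: "R \<inter> K = {}" using R(1) by blast
    have "card (R \<union> K) = card R + card K" using finR finK dj by (rule card_Un_disjoint)
    then have "card S = m" using R(2,3) cK km by simp
    then show "S \<in> {S. S \<subseteq> Y \<and> card S = m \<and> K \<subseteq> S}" using R(1,3) KY by blast
  qed
  have inj: "inj_on (\<lambda>R. R \<union> K) {R. R \<subseteq> Y - K \<and> card R = m - k}"
  proof (rule inj_onI)
    fix R R' assume "R \<in> {R. R \<subseteq> Y - K \<and> card R = m - k}" "R' \<in> {R. R \<subseteq> Y - K \<and> card R = m - k}"
      "R \<union> K = R' \<union> K"
    then show "R = R'" by blast
  qed
  have "card {S. S \<subseteq> Y \<and> card S = m \<and> K \<subseteq> S} = card {R. R \<subseteq> Y - K \<and> card R = m - k}"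
    unfolding eq using inj by (rule card_image)
  also have "\<dots> = card (Y - K) choose (m - k)" using fin by (intro n_subsets finite_Diff)
  also have "card (Y - K) = card Y - k" using KY finK cK by (simp add: card_Diff_subset)
  finally show ?thesis .
qed

lemma CL_low:
  assumes fin: "finite Y" and mY: "m \<le> card Y" and km: "k \<le> m"
  and hyp: "\<And>S. S \<subseteq> Y \<Longrightarrow> card S = m \<Longrightarrow> \<exists>I\<subseteq>S. card I = k \<and> indep_set E I"
  shows "(card Y choose k) \<le> card {K. K \<subseteq> Y \<and> card K = k \<and> indep_set E K} * (m choose k)"
proof -
  define KK where "KK = {K. K \<subseteq> Y \<and> card K = k \<and> indep_set E K}"
  define SS where "SS = {S. S \<subseteq> Y \<and> card S = m}"
  define P where "P = Sigma KK (\<lambda>K. {S. S \<subseteq> Y \<and> card S = m \<and> K \<subseteq> S})"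
  have fKK: "finite KK"
  proof (rule finite_subset[of _ "Pow Y"])
    show "KK \<subseteq> Pow Y" unfolding KK_def by auto
  qed (use fin in auto)
  have fin2: "\<forall>K\<in>KK. finite {S. S \<subseteq> Y \<and> card S = m \<and> K \<subseteq> S}"
  proof
    fix K show "finite {S. S \<subseteq> Y \<and> card S = m \<and> K \<subseteq> S}"
      by (rule finite_subset[of _ "Pow Y"]) (use fin in auto)
  qed
  have cP: "card P = card KK * ((card Y - k) choose (m - k))"
  proof -
    have "card P = (\<Sum>K\<in>KK. card {S. S \<subseteq> Y \<and> card S = m \<and> K \<subseteq> S})"
      unfolding P_def using fKK fin2 by (rule card_SigmaI)
    also have "\<dots> = (\<Sum>K\<in>KK. (card Y - k) choose (m - k))"
    proof (rule sum.cong)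
      fix K assume "K \<in> KK"
      then have "K \<subseteq> Y" "card K = k" by (auto simp: KK_def)
      then show "card {S. S \<subseteq> Y \<and> card S = m \<and> K \<subseteq> S} = (card Y - k) choose (m - k)"
        using cnt_sup[OF fin _ _ km] by blast
    qed simp
    finally show ?thesis by simp
  qed
  have fP: "finite P" unfolding P_def using fKK fin2 by (intro finite_SigmaI) auto
  have "SS \<subseteq> snd ` P"
  proof
    fix S assume "S \<in> SS"
    then have S: "S \<subseteq> Y" "card S = m" by (auto simp: SS_def)
    obtain I where I: "I \<subseteq> S" "card I = k" "indep_set E I" using hyp[OF S] by blast
    have "(I, S) \<in> P" unfolding P_def KK_def using I S by auto
    then show "S \<in> snd ` P" by (rule image_eqI[rotated]) simp
  qed
  then have "card SS \<le> card (snd ` P)" using fP by (intro card_mono finite_imageI)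
  also have "\<dots> \<le> card P" using fP by (rule card_image_le)
  finally have "card SS \<le> card P" .
  moreover have "card SS = card Y choose m" unfolding SS_def by (rule n_subsets[OF fin])
  ultimately have a: "card Y choose m \<le> card KK * ((card Y - k) choose (m - k))" using cP by simp
  have b: "(card Y choose m) * (m choose k) = (card Y choose k) * ((card Y - k) choose (m - k))"
    by (rule choose_mult[OF km mY])
  have pos: "0 < (card Y - k) choose (m - k)" using km mY by (intro zero_less_binomial) linarith
  have "(card Y choose k) * ((card Y - k) choose (m - k)) \<le> card KK * ((card Y - k) choose (m - k)) * (m choose k)"
    unfolding b[symmetric] by (rule mult_le_mono1[OF a])
  then have "(card Y choose k) * ((card Y - k) choose (m - k)) \<le> (card KK * (m choose k)) * ((card Y - k) choose (m - k))"
    by (simp only: ac_simps)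
  then have "card Y choose k \<le> card KK * (m choose k)" using pos mult_le_cancel2 by blast
  then show ?thesis unfolding KK_def .
qed

lemma CL_up:
  assumes fin: "finite Y" and lk: "l \<le> k"
  and neg: "\<And>T. T \<subseteq> Y \<Longrightarrow> card T = l \<Longrightarrow> indep_set E T \<Longrightarrow> card (CN E Y T) * k^a < card Y"
  shows "card {K. K \<subseteq> Y \<and> card K = k \<and> indep_set E K} * k^(a*(k-l)) \<le> card Y ^ k"
proof -
  define KK where "KK = {K. K \<subseteq> Y \<and> card K = k \<and> indep_set E K}"
  define TT where "TT = {T. T \<subseteq> Y \<and> card T = l \<and> indep_set E T}"
  define B where "B = (\<lambda>T. {R. R \<subseteq> CN E Y T \<and> card R = k - l})"
  define ch where "ch = (\<lambda>K::nat set. SOME T. T \<subseteq> K \<and> card T = l)"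
  define f where "f = (\<lambda>K. (ch K, K - ch K))"
  have fTT: "finite TT"
  proof (rule finite_subset[of _ "Pow Y"])
    show "TT \<subseteq> Pow Y" unfolding TT_def by auto
  qed (use fin in auto)
  have finCN: "finite (CN E Y T)" for T by (rule finite_subset[OF _ fin]) (auto simp: CN_def)
  have fB: "\<forall>T\<in>TT. finite (B T)"
  proof
    fix T show "finite (B T)" unfolding B_def
      by (rule finite_subset[of _ "Pow (CN E Y T)"]) (use finCN[of T] in auto)
  qed
  have ch: "ch K \<subseteq> K \<and> card (ch K) = l" if "K \<in> KK" for K
  proof -
    have "l \<le> card K" using that lk by (auto simp: KK_def)
    then obtain T where "T \<subseteq> K" "card T = l" using obtain_subset_with_card_n by metis
    then show ?thesis using someI[of "\<lambda>T. T \<subseteq> K \<and> card T = l" T] unfolding ch_def by blast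
  qed
  have inj: "inj_on f KK"
  proof (rule inj_onI)
    fix K K' assume "K \<in> KK" "K' \<in> KK" "f K = f K'"
    then have "ch K = ch K'" "K - ch K = K' - ch K'" by (auto simp: f_def)
    moreover have "K = ch K \<union> (K - ch K)" "K' = ch K' \<union> (K' - ch K')"
      using ch \<open>K \<in> KK\<close> \<open>K' \<in> KK\<close> by auto
    ultimately show "K = K'" by metis
  qed
  have img: "f ` KK \<subseteq> Sigma TT B"
  proof
    fix x assume "x \<in> f ` KK"
    then obtain K where K: "K \<in> KK" "x = f K" by auto
    have KY: "K \<subseteq> Y" "card K = k" "indep_set E K" using K by (auto simp: KK_def)
    have fK: "finite K" using KY(1) fin by (rule finite_subset)
    have c: "ch K \<subseteq> K" "card (ch K) = l" using ch K by auto
    have "ch K \<in> TT" using c KY unfolding TT_def indep_set_def by auto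
    moreover have "K - ch K \<in> B (ch K)"
    proof -
      have "K - ch K \<subseteq> CN E Y (ch K)"
      proof
        fix y assume y: "y \<in> K - ch K"
        have "\<forall>t\<in>ch K. \<not> E y t \<and> \<not> E t y"
        proof
          fix t assume t: "t \<in> ch K"
          then have "t \<in> K" "t \<noteq> y" using c(1) y by auto
          then show "\<not> E y t \<and> \<not> E t y" using KY(3) y unfolding indep_set_def by auto
        qed
        then show "y \<in> CN E Y (ch K)" using y KY(1) unfolding CN_def by auto
      qed
      moreover have "card (K - ch K) = k - l"
      proof -
        have "finite (ch K)" using c(1) fK by (rule finite_subset)
        then have "card (K - ch K) = card K - card (ch K)" using c(1) by (rule card_Diff_subset)
        then show ?thesis using c(2) KY(2) by simp
      qed
      ultimately show ?thesis unfolding B_def by auto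
    qed
    ultimately show "x \<in> Sigma TT B" using K by (auto simp: f_def)
  qed
  have fSig: "finite (Sigma TT B)" using fTT fB by (intro finite_SigmaI) blast+
  have "card KK = card (f ` KK)" using inj by (rule card_image[symmetric])
  also have "\<dots> \<le> card (Sigma TT B)" using fSig img by (rule card_mono)
  also have "\<dots> = (\<Sum>T\<in>TT. card (B T))" using fTT fB by (rule card_SigmaI)
  also have "\<dots> = (\<Sum>T\<in>TT. card (CN E Y T) choose (k - l))"
  proof (rule sum.cong)
    fix T show "card (B T) = card (CN E Y T) choose (k - l)" unfolding B_def by (rule n_subsets[OF finCN])
  qed simp
  finally have c1: "card KK \<le> (\<Sum>T\<in>TT. card (CN E Y T) choose (k - l))" .
  have "card KK * k^(a*(k-l)) = card KK * (k^a)^(k-l)" by (simp add: power_mult)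
  also have "\<dots> \<le> (\<Sum>T\<in>TT. card (CN E Y T) choose (k - l)) * (k^a)^(k-l)"
    by (rule mult_le_mono1[OF c1])
  also have "\<dots> = (\<Sum>T\<in>TT. (card (CN E Y T) choose (k - l)) * (k^a)^(k-l))"
    by (rule sum_distrib_right)
  also have "\<dots> \<le> (\<Sum>T\<in>TT. card Y ^ (k-l))"
  proof (rule sum_mono)
    fix T assume T: "T \<in> TT"
    have "(card (CN E Y T) choose (k - l)) * (k^a)^(k-l) \<le> card (CN E Y T) ^ (k-l) * (k^a)^(k-l)"
    proof (cases "k - l \<le> card (CN E Y T)")
      case True show ?thesis using binomial_le_pow[OF True] by (rule mult_le_mono1)
    next
      case False then show ?thesis by (simp add: binomial_eq_0)
    qed
    also have "\<dots> = (card (CN E Y T) * k^a) ^ (k-l)" by (simp add: power_mult_distrib)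
    also have "\<dots> \<le> card Y ^ (k-l)"
      using neg[of T] T unfolding TT_def by (intro power_mono) auto
    finally show "(card (CN E Y T) choose (k - l)) * (k^a)^(k-l) \<le> card Y ^ (k-l)" .
  qed
  also have "\<dots> = card TT * card Y ^ (k-l)" by simp
  also have "\<dots> \<le> (card Y choose l) * card Y ^ (k-l)"
  proof -
    have finS: "finite {T. T \<subseteq> Y \<and> card T = l}"
      by (rule finite_subset[of _ "Pow Y"]) (use fin in auto)
    have "card TT \<le> card {T. T \<subseteq> Y \<and> card T = l}"
      using finS by (rule card_mono) (auto simp: TT_def)
    also have "\<dots> = card Y choose l" by (rule n_subsets[OF fin])
    finally show ?thesis by (rule mult_le_mono1)
  qed
  also have "\<dots> \<le> card Y ^ l * card Y ^ (k-l)"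
  proof (cases "l \<le> card Y")
    case True show ?thesis using binomial_le_pow[OF True] by (rule mult_le_mono1)
  next
    case False then show ?thesis by (simp add: binomial_eq_0)
  qed
  also have "\<dots> = card Y ^ k" using lk by (simp add: power_add[symmetric])
  finally show ?thesis unfolding KK_def .
qed

lemma pow_le_choose: assumes "k \<le> n" "1 \<le> k" shows "n ^ k \<le> k ^ k * (n choose k)"
proof -
  have "(real n / real k) ^ k \<le> real (n choose k)" using binomial_ge_n_over_k_pow_k assms(1) by blast
  then have "(real n / real k) ^ k * real k ^ k \<le> real (n choose k) * real k ^ k"
    by (intro mult_right_mono) auto
  moreover have "(real n / real k) ^ k * real k ^ k = real n ^ k"
    using assms(2) by (simp add: power_divide)
  ultimately have "real (n ^ k) \<le> real (k ^ k * (n choose k))" by (simp add: mult.commute)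
  then show ?thesis by linarith
qed

lemma CL:
  assumes fin: "finite Y" and mY: "m \<le> card Y" and km: "k \<le> m" and lk: "l \<le> k" and k1: "1 \<le> k"
  and hyp: "\<And>S. S \<subseteq> Y \<Longrightarrow> card S = m \<Longrightarrow> \<exists>I\<subseteq>S. card I = k \<and> indep_set E I"
  and neg: "\<And>T. T \<subseteq> Y \<Longrightarrow> card T = l \<Longrightarrow> indep_set E T \<Longrightarrow> card (CN E Y T) * k^a < card Y"
  shows "k^(a*(k-l)) \<le> (k*m)^k"
proof -
  define K where "K = card {K. K \<subseteq> Y \<and> card K = k \<and> indep_set E K}"
  have low: "card Y choose k \<le> K * (m choose k)" unfolding K_def by (rule CL_low[OF fin mY km hyp])
  have up: "K * k^(a*(k-l)) \<le> card Y ^ k" unfolding K_def by (rule CL_up[OF fin lk neg])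
  have Yk: "card Y ^ k \<le> k^k * (card Y choose k)" using pow_le_choose km mY k1 by auto
  have mk: "m choose k \<le> m ^ k" using binomial_le_pow km by blast
  have "0 < card Y choose k" using km mY by (intro zero_less_binomial) linarith
  then have Kpos: "0 < K" using low by (metis gr0I mult_0 not_le)
  have "K * k^(a*(k-l)) \<le> k^k * (K * (m choose k))"
    using up Yk low by (meson le_trans mult_le_mono2)
  also have "\<dots> \<le> k^k * (K * m^k)" using mk by simp
  also have "\<dots> = K * (k*m)^k" by (simp add: power_mult_distrib)
  finally show ?thesis using Kpos by simp
qed

lemma RL:
  assumes finW: "finite W"
  and hyp: "\<And>S. S \<subseteq> W \<Longrightarrow> card S = m \<Longrightarrow> \<exists>I\<subseteq>S. card I = k \<and> indep_set E I"
  and km: "k \<le> m" and lk: "l \<le> k" and k1: "1 \<le> k" and num: "(k*m)^k < k^(a*(k-l))"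
  and big: "m * k^(a*r) \<le> card W"
  shows "\<exists>J\<subseteq>W. indep_set E J \<and> card J = r*l"
proof -
  have main: "\<exists>J Y. J \<subseteq> W \<and> Y \<subseteq> W \<and> indep_set E J \<and> card J = j*l \<and> J \<inter> Y = {} \<and>
       (\<forall>y\<in>Y. \<forall>t\<in>J. \<not> E y t \<and> \<not> E t y) \<and> card W \<le> card Y * k^(a*j)" if "j \<le> r" for j
    using that
  proof (induction j)
    case 0
    show ?case by (rule exI[of _ "{}"], rule exI[of _ W]) (auto simp: indep_set_def)
  next
    case (Suc j)
    then obtain J Y where JY: "J \<subseteq> W" "Y \<subseteq> W" "indep_set E J" "card J = j*l" "J \<inter> Y = {}"
      "\<forall>y\<in>Y. \<forall>t\<in>J. \<not> E y t \<and> \<not> E t y" "card W \<le> card Y * k^(a*j)" by auto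
    have finY: "finite Y" using JY(2) finW finite_subset by blast
    have finJ: "finite J" using JY(1) finW finite_subset by blast
    have jr: "j < r" using Suc by simp
    have kp: "0 < k^(a*j)" using k1 by simp
    have e: "a*r = a*(r-j) + a*j" using jr by (metis add_mult_distrib2 le_add_diff_inverse2 less_imp_le)
    have "m * k^(a*(r-j)) * k^(a*j) = m * k^(a*r)"
      by (simp only: e power_add mult.assoc)
    also have "\<dots> \<le> card Y * k^(a*j)" using big JY(7) by linarith
    finally have "m * k^(a*(r-j)) * k^(a*j) \<le> card Y * k^(a*j)" .
    then have "m * k^(a*(r-j)) \<le> card Y" using kp mult_le_cancel2 by blast
    moreover have "m \<le> m * k^(a*(r-j))" using k1 by simp
    ultimately have mY: "m \<le> card Y" by linarith
    have "\<exists>T. T \<subseteq> Y \<and> card T = l \<and> indep_set E T \<and> card Y \<le> card (CN E Y T) * k^a"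
    proof (rule ccontr)
      assume "\<not> ?thesis"
      then have neg: "\<And>T. T \<subseteq> Y \<Longrightarrow> card T = l \<Longrightarrow> indep_set E T \<Longrightarrow> card (CN E Y T) * k^a < card Y"
        using not_le by blast
      have "k^(a*(k-l)) \<le> (k*m)^k"
        by (rule CL[OF finY mY km lk k1 _ neg]) (use hyp JY(2) in blast)
      then show False using num by simp
    qed
    then obtain T where T: "T \<subseteq> Y" "card T = l" "indep_set E T" "card Y \<le> card (CN E Y T) * k^a" by blast
    have finT: "finite T" using T(1) finY finite_subset by blast
    show ?case
    proof (intro exI conjI)
      show "J \<union> T \<subseteq> W" using JY T by auto
      show "CN E Y T \<subseteq> W" using JY(2) by (auto simp: CN_def)
      show "indep_set E (J \<union> T)" using JY(3,6) T(1,3) unfolding indep_set_def by blast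
      show "card (J \<union> T) = Suc j * l" using JY(4,5) T(1,2) finJ finT
        by (subst card_Un_disjoint) auto
      show "(J \<union> T) \<inter> CN E Y T = {}" using JY(5) by (auto simp: CN_def)
      show "\<forall>y\<in>CN E Y T. \<forall>t\<in>J \<union> T. \<not> E y t \<and> \<not> E t y" using JY(6) by (auto simp: CN_def)
      have "card W \<le> card Y * k^(a*j)" by (rule JY(7))
      also have "\<dots> \<le> card (CN E Y T) * k^a * k^(a*j)" using T(4) by (rule mult_le_mono1)
      also have "\<dots> = card (CN E Y T) * k^(a * Suc j)" by (simp add: power_add)
      finally show "card W \<le> card (CN E Y T) * k^(a * Suc j)" .
    qed
  qed
  obtain J Y where JY: "J \<subseteq> W" "Y \<subseteq> W" "indep_set E J" "card J = r*l" "J \<inter> Y = {}"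
       "\<forall>y\<in>Y. \<forall>t\<in>J. \<not> E y t \<and> \<not> E t y" "card W \<le> card Y * k^(a*r)"
    using main[OF order_refl] by (elim exE conjE)
  show ?thesis
    by (rule exI[of _ J]) (simp add: JY(1,3,4))
qed

lemma comb_main:
  assumes k2: "2 \<le> k" and km: "k \<le> m" and num: "(k*m)^k < k^(a*(k - k div 2))"
  and hyp: "\<forall>S. S \<subseteq> {0..<n} \<and> card S = m \<longrightarrow> has_clique E S k \<and> has_indep E S k"
  and q1: "m \<le> (k-1)*q" and q2: "q \<le> r*(k div 2)" and q3: "m*k^(a*r) + (k-1)*q \<le> n"
  shows False
proof -
  define l where "l = k div 2"
  have lk: "l \<le> k" unfolding l_def by simp
  have k1: "1 \<le> k" using k2 by simp
  have union: "\<exists>A\<subseteq>{0..<n}. card A = i*q \<and> (\<forall>K\<subseteq>A. clique_set E K \<longrightarrow> card K \<le> i)" if "i \<le> k-1" for i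
    using that
  proof (induction i)
    case 0 show ?case by (rule exI[of _ "{}"]) auto
  next
    case (Suc i)
    then obtain A where A: "A \<subseteq> {0..<n}" "card A = i*q" "\<forall>K\<subseteq>A. clique_set E K \<longrightarrow> card K \<le> i" by auto
    define W where "W = {0..<n} - A"
    have finW: "finite W" unfolding W_def by simp
    have finA: "finite A" using A(1) finite_subset by blast
    have cW: "card W = n - i*q" unfolding W_def using A(1,2) by (simp add: card_Diff_subset finA)
    have "i*q \<le> (k-1)*q" using Suc.prems by simp
    then have big: "m * k^(a*r) \<le> card W" using cW q3 by linarith
    have hypW: "\<And>S. S \<subseteq> W \<Longrightarrow> card S = m \<Longrightarrow> \<exists>I\<subseteq>S. card I = k \<and> indep_set E I"
      using hyp unfolding W_def has_indep_def indep_set_def by blast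
    obtain J where J: "J \<subseteq> W" "indep_set E J" "card J = r*l"
      using RL[OF finW hypW km lk k1 _ big] num unfolding l_def by blast
    obtain I where I: "I \<subseteq> J" "card I = q" "finite I"
      using obtain_subset_with_card_n[of q J] J(3) q2 unfolding l_def by metis
    have indI: "indep_set E I" using J(2) I(1) unfolding indep_set_def by blast
    show ?case
    proof (intro exI conjI allI impI)
      show "A \<union> I \<subseteq> {0..<n}" using A(1) I(1) J(1) W_def by auto
      have "A \<inter> I = {}" using I(1) J(1) W_def by auto
      then show "card (A \<union> I) = Suc i * q" using A(2) I(2,3) finA by (simp add: card_Un_disjoint)
    next
      fix K assume K: "K \<subseteq> A \<union> I" "clique_set E K"
      have eqK: "(K \<inter> A) \<union> (K \<inter> I) = K" using K(1) by blast
      have "card ((K \<inter> A) \<union> (K \<inter> I)) \<le> card (K \<inter> A) + card (K \<inter> I)" by (rule card_Un_le)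
      then have "card K \<le> card (K \<inter> A) + card (K \<inter> I)" by (simp only: eqK)
      moreover have "card (K \<inter> A) \<le> i"
      proof -
        have "clique_set E (K \<inter> A)" using K(2) unfolding clique_set_def by blast
        moreover have "K \<inter> A \<subseteq> A" by blast
        ultimately show ?thesis using A(3) by blast
      qed
      moreover have "card (K \<inter> I) \<le> Suc 0"
        using K(2) indI I(3) unfolding clique_set_def indep_set_def
        by (subst card_le_Suc0_iff_eq) auto
      ultimately show "card K \<le> Suc i" by linarith
    qed
  qed
  obtain A where A: "A \<subseteq> {0..<n}" "card A = (k-1)*q" "\<forall>K\<subseteq>A. clique_set E K \<longrightarrow> card K \<le> k-1"
    using union[of "k-1"] by blast
  obtain S where S: "S \<subseteq> A" "card S = m" using obtain_subset_with_card_n[of m A] A(2) q1 by metis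
  then have "S \<subseteq> {0..<n}" using A(1) by blast
  then have "has_clique E S k" using hyp S(2) by blast
  then obtain K where K: "K \<subseteq> S" "card K = k" "clique_set E K" unfolding has_clique_def clique_set_def by blast
  have "K \<subseteq> A" using K(1) S(1) by blast
  then have "card K \<le> k-1" using A(3) K(3) by blast
  then show False using K(2) k1 by linarith
qed


lemma asym1:
  "eventually (\<lambda>x::real. 10 * ((((1/100) * ln x ^ 3 / ln (ln x) + 1) / (ln x - 2) + 1) / ((ln x - 2) / 2) + 1) * ln (ln x) \<le> ln x / 2) at_top"
  by real_asymp

lemma asym2:
  "eventually (\<lambda>x::real. ((1/100) * ln x ^ 3 / ln (ln x) + 1) * exp (ln x / 2)
       + ((1/100) * ln x ^ 3 / ln (ln x) + 1) + ln x \<le> x) at_top"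
  by real_asymp

lemma asym3:
  "eventually (\<lambda>x::real. 3 \<le> ln x \<and> 1 \<le> ln (ln x) \<and> ln x \<le> (1/100) * ln x ^ 3 / ln (ln x) \<and>
     (1/100) * ln x ^ 3 / ln (ln x) + 1 < (ln x - 1) ^ 4) at_top"
  by (intro eventually_conj; real_asymp)

lemma numeric:
  fixes n :: nat and L :: real
  assumes Ldef: "L = ln (real n)"
  and h1: "3 \<le> L" and h2: "1 \<le> ln L" and h3: "L \<le> (1/100) * L ^ 3 / ln L"
  and h4: "(1/100) * L ^ 3 / ln L + 1 < (L - 1) ^ 4"
  and h5: "10 * ((((1/100) * L ^ 3 / ln L + 1) / (L - 2) + 1) / ((L - 2) / 2) + 1) * ln L \<le> L / 2"
  and h6: "((1/100) * L ^ 3 / ln L + 1) * exp (L / 2) + ((1/100) * L ^ 3 / ln L + 1) + L \<le> real n"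
  shows "\<not> (\<exists>E. simple_graph E \<and>
     (\<forall>S. S \<subseteq> {0..<n} \<and> card S = nat \<lceil>(1/100) * ln (real n) ^ 3 / ln (ln (real n))\<rceil> \<longrightarrow>
        has_clique E S (nat \<lfloor>ln (real n)\<rfloor>) \<and> has_indep E S (nat \<lfloor>ln (real n)\<rfloor>)))"
proof
  define k where "k = nat \<lfloor>L\<rfloor>"
  define m where "m = nat \<lceil>(1/100) * L ^ 3 / ln L\<rceil>"
  define M where "M = (1/100) * L ^ 3 / ln L + 1"
  define l where "l = k div 2"
  define q where "q = m div (k - 1) + 1"
  define r where "r = q div l + 1"
  define R where "R = ((M / (L - 2) + 1) / ((L - 2) / 2) + 1)"
  assume "\<exists>E. simple_graph E \<and>
     (\<forall>S. S \<subseteq> {0..<n} \<and> card S = nat \<lceil>(1/100) * ln (real n) ^ 3 / ln (ln (real n))\<rceil> \<longrightarrow>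
        has_clique E S (nat \<lfloor>ln (real n)\<rfloor>) \<and> has_indep E S (nat \<lfloor>ln (real n)\<rfloor>))"
  then obtain E where hyp: "\<forall>S. S \<subseteq> {0..<n} \<and> card S = m \<longrightarrow> has_clique E S k \<and> has_indep E S k"
    unfolding Ldef[symmetric] k_def m_def by blast
  have Lpos: "0 < L" using h1 by simp
  have lnLpos: "0 < ln L" using h2 by simp
  have rk: "real k = of_int \<lfloor>L\<rfloor>" unfolding k_def using h1 by simp
  have kL: "real k \<le> L" "L - 1 < real k" using rk floor_correct[of L] by auto
  have k3: "3 \<le> k" using kL(2) h1 by linarith
  have y0: "0 \<le> (1/100) * L ^ 3 / ln L" using Lpos lnLpos by simp
  have rm: "real m = of_int \<lceil>(1/100) * L ^ 3 / ln L\<rceil>" unfolding m_def using y0 by simp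
  have mM: "real m < M" "(1/100) * L ^ 3 / ln L \<le> real m"
    using rm ceiling_correct[of "(1/100) * L ^ 3 / ln L"] unfolding M_def by auto
  have km: "k \<le> m" using kL(1) h3 mM(2) by linarith
  have "real m < real k ^ 4"
  proof -
    have "(L - 1) ^ 4 < real k ^ 4" using kL(2) h1 by (intro power_strict_mono) auto
    then show ?thesis using mM(1) h4 unfolding M_def by linarith
  qed
  then have m4: "m < k ^ 4" by (metis of_nat_less_iff of_nat_power)
  have num: "(k*m)^k < k^(10*(k - k div 2))"
  proof -
    have "k * m < k * k^4" using m4 k3 by simp
    moreover have "k * k^4 = k^5" by (simp add: numeral_eq_Suc)
    ultimately have "k * m < k^5" by simp
    then have "(k*m)^k < (k^5)^k" using k3 by (intro power_strict_mono) auto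
    also have "\<dots> = k^(5*k)" by (simp add: power_mult)
    also have "\<dots> \<le> k^(10*(k - k div 2))" using k3 by (intro power_increasing) auto
    finally show ?thesis .
  qed
  have k1pos: "0 < k - 1" using k3 by simp
  have q1: "m \<le> (k-1)*q"
  proof -
    define d where "d = k - 1"
    have dpos: "0 < d" using k1pos d_def by simp
    have e: "d * q = d * (m div d) + d" unfolding q_def d_def by (simp add: distrib_left)
    show ?thesis using e mult_div_mod_eq[of d m] mod_less_divisor[OF dpos, of m] unfolding d_def by linarith
  qed
  have lpos: "0 < l" unfolding l_def using k3 by simp
  have q2: "q \<le> r*l"
  proof -
    have e: "r * l = l * (q div l) + l" unfolding r_def by (simp add: algebra_simps)
    show ?thesis using e mult_div_mod_eq[of l q] mod_less_divisor[OF lpos, of q] by linarith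
  qed
  have q3: "m*k^(10*r) + (k-1)*q \<le> n"
  proof -
    have L2: "0 < L - 2" using h1 by simp
    have rk1: "real (k - 1) = real k - 1" using k3 by simp
    have "real q \<le> real m / real (k - 1) + 1" unfolding q_def using of_nat_div_le_of_nat[of m "k-1"] by simp
    also have "real m / real (k - 1) \<le> M / (L - 2)"
      using mM(1) kL(2) L2 rk1 y0 mM(2) by (intro frac_le) auto
    finally have rq: "real q \<le> M / (L - 2) + 1" by simp
    have "2 * l + 1 \<ge> k" unfolding l_def by simp
    then have "real k \<le> real (2 * l + 1)" by (simp only: of_nat_le_iff)
    then have "real k \<le> 2 * real l + 1" by simp
    then have "L - 2 \<le> 2 * real l" using kL(2) by linarith
    then have rl: "real l \<ge> (L - 2) / 2" by simp
    have "real r \<le> real q / real l + 1" unfolding r_def using of_nat_div_le_of_nat[of q l] by simp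
    also have "real q / real l \<le> (M / (L - 2) + 1) / ((L - 2) / 2)"
      using rq rl L2 by (intro frac_le) auto
    finally have rr: "real r \<le> R" unfolding R_def by simp
    have "real (k ^ (10 * r)) = real k ^ (10 * r)" by simp
    also have "\<dots> \<le> L ^ (10 * r)" using kL(1) by (intro power_mono) auto
    also have "\<dots> = exp (ln (L ^ (10 * r)))" using Lpos by simp
    also have "\<dots> = exp (real (10 * r) * ln L)" by (simp only: ln_realpow)
    also have "\<dots> \<le> exp (10 * R * ln L)" using rr lnLpos by simp
    also have "\<dots> \<le> exp (L / 2)" using h5 unfolding R_def M_def by simp
    finally have e: "real (k ^ (10 * r)) \<le> exp (L / 2)" .
    have "real (m * k ^ (10 * r)) \<le> M * exp (L / 2)"
      using e mM(1) by (simp only: of_nat_mult) (intro mult_mono, auto)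
    moreover have "(k - 1) * q \<le> m + (k - 1)"
    proof -
      have "(k-1) * (m div (k-1)) \<le> m" by (simp add: times_div_less_eq_dividend)
      then show ?thesis unfolding q_def by (simp add: algebra_simps)
    qed
    then have "real ((k - 1) * q) \<le> real (m + (k - 1))" by (simp only: of_nat_le_iff)
    then have "real ((k - 1) * q) \<le> real m + (real k - 1)" using rk1 by simp
    then have "real ((k - 1) * q) \<le> M + L" using mM(1) kL(1) by linarith
    ultimately have "real (m*k^(10*r) + (k-1)*q) \<le> M * exp (L / 2) + M + L" by simp
    also have "\<dots> \<le> real n" using h6 unfolding M_def by simp
    finally show ?thesis by (simp only: of_nat_le_iff)
  qed
  have q2': "q \<le> r * (k div 2)" using q2 unfolding l_def .
  have k2: "2 \<le> k" using k3 by simp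
  show False by (rule comb_main[OF k2 km num hyp q1 q2' q3])
qed

theorem mainTheorem9:
  shows "\<exists>c::real. c > 0 \<and> (\<exists>N::nat. \<forall>n\<ge>N. \<not> (\<exists>E. simple_graph E \<and>
     (\<forall>S. S \<subseteq> {0..<n} \<and> card S = nat \<lceil>c * ln (real n) ^ 3 / ln (ln (real n))\<rceil> \<longrightarrow>
        has_clique E S (nat \<lfloor>ln (real n)\<rfloor>) \<and> has_indep E S (nat \<lfloor>ln (real n)\<rfloor>))))"
proof -
  have "eventually (\<lambda>x::real. (3 \<le> ln x \<and> 1 \<le> ln (ln x) \<and> ln x \<le> (1/100) * ln x ^ 3 / ln (ln x) \<and>
     (1/100) * ln x ^ 3 / ln (ln x) + 1 < (ln x - 1) ^ 4) \<and>
     10 * ((((1/100) * ln x ^ 3 / ln (ln x) + 1) / (ln x - 2) + 1) / ((ln x - 2) / 2) + 1) * ln (ln x) \<le> ln x / 2 \<and>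
     ((1/100) * ln x ^ 3 / ln (ln x) + 1) * exp (ln x / 2)
       + ((1/100) * ln x ^ 3 / ln (ln x) + 1) + ln x \<le> x) at_top"
    by (rule eventually_conj[OF asym3 eventually_conj[OF asym1 asym2]])
  then obtain X :: real where X: "\<And>x::real. x \<ge> X \<Longrightarrow> (3 \<le> ln x \<and> 1 \<le> ln (ln x) \<and> ln x \<le> (1/100) * ln x ^ 3 / ln (ln x) \<and>
     (1/100) * ln x ^ 3 / ln (ln x) + 1 < (ln x - 1) ^ 4) \<and>
     10 * ((((1/100) * ln x ^ 3 / ln (ln x) + 1) / (ln x - 2) + 1) / ((ln x - 2) / 2) + 1) * ln (ln x) \<le> ln x / 2 \<and>
     ((1/100) * ln x ^ 3 / ln (ln x) + 1) * exp (ln x / 2)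
       + ((1/100) * ln x ^ 3 / ln (ln x) + 1) + ln x \<le> x"
    unfolding eventually_at_top_linorder by blast
  show ?thesis
  proof (intro exI[of _ "1/100::real"] conjI exI[of _ "nat \<lceil>X\<rceil>"] allI impI)
    show "(0::real) < 1/100" by simp
  next
    fix n :: nat assume "nat \<lceil>X\<rceil> \<le> n"
    then have "X \<le> real n" by linarith
    note H = X[OF this]
    show "\<not> (\<exists>E. simple_graph E \<and>
     (\<forall>S. S \<subseteq> {0..<n} \<and> card S = nat \<lceil>(1/100) * ln (real n) ^ 3 / ln (ln (real n))\<rceil> \<longrightarrow>
        has_clique E S (nat \<lfloor>ln (real n)\<rfloor>) \<and> has_indep E S (nat \<lfloor>ln (real n)\<rfloor>)))"
      by (rule numeric[OF refl]) (use H in auto)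
  qed
qed

end
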